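(* Let $G$ be a group acting by graph automorphisms on connected graphs $\Gamma_1$ and $\Gamma_2$, each with finitely many orbits of edges. Suppose there is a bijection $\beta: V(\Gamma_1)\to V(\Gamma_2)$ between the vertex sets such that $\beta(gv)=g\beta(v)$ for all $g\in G$ and $v\in V(\Gamma_1)$. Then $\Gamma_1$ and $\Gamma_2$ (with combinatorial metrics) are quasi-isometric.
   Context: Graphs are equipped with the combinatorial metric (each edge has length 1); they need not be locally finite. Metric spaces $M_1,M_2$ are quasi-isometric if there are $\lambda>0$, $c\ge0$, $\varepsilon\ge0$ and a map $\alpha:M_1\to M_2$ with $\frac1\lambda d(x,y)-c\le d(\alpha(x),\alpha(y))\le \lambda d(x,y)+c$ for all $x,y\in M_1$, and every point of $M_2$ within distance $\varepsilon$ of $\alpha(M_1)$. *)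

theory Defs
  imports Complex_Main "HOL-Algebra.Group_Action"
begin

definition graph :: "'v set \<Rightarrow> 'v set set \<Rightarrow> bool" where
  "graph V E \<longleftrightarrow> E \<subseteq> {{u, v} | u v. u \<in> V \<and> v \<in> V \<and> u \<noteq> v}"

definition walk :: "'v set \<Rightarrow> 'v set set \<Rightarrow> 'v list \<Rightarrow> bool" where
  "walk V E xs \<longleftrightarrow> xs \<noteq> [] \<and> set xs \<subseteq> V \<and>
     (\<forall>i. Suc i < length xs \<longrightarrow> {xs ! i, xs ! Suc i} \<in> E)"

definition graph_connected :: "'v set \<Rightarrow> 'v set set \<Rightarrow> bool" where
  "graph_connected V E \<longleftrightarrow>
     (\<forall>u\<in>V. \<forall>v\<in>V. \<exists>xs. walk V E xs \<and> hd xs = u \<and> last xs = v)"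

definition gdist :: "'v set \<Rightarrow> 'v set set \<Rightarrow> 'v \<Rightarrow> 'v \<Rightarrow> real" where
  "gdist V E u v = real (LEAST n. \<exists>xs. walk V E xs \<and> hd xs = u \<and> last xs = v \<and> length xs = Suc n)"

definition acts_by_automorphisms ::
  "('g, 'm) monoid_scheme \<Rightarrow> ('g \<Rightarrow> 'v \<Rightarrow> 'v) \<Rightarrow> 'v set \<Rightarrow> 'v set set \<Rightarrow> bool" where
  "acts_by_automorphisms G \<phi> V E \<longleftrightarrow> group_action G V \<phi> \<and>
     (\<forall>g\<in>carrier G. \<forall>u\<in>V. \<forall>v\<in>V. {u, v} \<in> E \<longleftrightarrow> {\<phi> g u, \<phi> g v} \<in> E)"

definition finitely_many_edge_orbits ::
  "('g, 'm) monoid_scheme \<Rightarrow> ('g \<Rightarrow> 'v \<Rightarrow> 'v) \<Rightarrow> 'v set set \<Rightarrow> bool" where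
  "finitely_many_edge_orbits G \<phi> E \<longleftrightarrow> finite (orbits G E (\<lambda>g e. \<phi> g ` e))"

definition quasi_isometric ::
  "'a set \<Rightarrow> ('a \<Rightarrow> 'a \<Rightarrow> real) \<Rightarrow> 'b set \<Rightarrow> ('b \<Rightarrow> 'b \<Rightarrow> real) \<Rightarrow> bool" where
  "quasi_isometric M1 d1 M2 d2 \<longleftrightarrow>
     (\<exists>lam::real>0. \<exists>c::real\<ge>0. \<exists>\<epsilon>::real\<ge>0. \<exists>\<alpha>. \<alpha> ` M1 \<subseteq> M2 \<and>
        (\<forall>x\<in>M1. \<forall>y\<in>M1. d1 x y / lam - c \<le> d2 (\<alpha> x) (\<alpha> y) \<and> d2 (\<alpha> x) (\<alpha> y) \<le> lam * d1 x y + c) \<and>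
        (\<forall>z\<in>M2. \<exists>x\<in>M1. d2 z (\<alpha> x) \<le> \<epsilon>))"

end

theory Submission
  imports Defs
begin

lemma walk_single: "v \<in> V \<Longrightarrow> walk V E [v]"
  by (simp add: walk_def)

lemma walk_Cons2: "walk V E (x # y # xs) \<longleftrightarrow> x \<in> V \<and> {x, y} \<in> E \<and> walk V E (y # xs)"
proof
  assume w: "walk V E (x # y # xs)"
  have "\<forall>i. Suc i < length (y # xs) \<longrightarrow> {(y#xs) ! i, (y#xs) ! Suc i} \<in> E"
  proof (intro allI impI)
    fix i assume "Suc i < length (y # xs)"
    then have "Suc (Suc i) < length (x # y # xs)" by simp
    moreover have "\<forall>j. Suc j < length (x#y#xs) \<longrightarrow> {(x#y#xs) ! j, (x#y#xs) ! Suc j} \<in> E"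
      using w unfolding walk_def by blast
    ultimately have "{(x#y#xs) ! Suc i, (x#y#xs) ! Suc (Suc i)} \<in> E" by blast
    then show "{(y#xs) ! i, (y#xs) ! Suc i} \<in> E" by simp
  qed
  moreover have "{(x#y#xs) ! 0, (x#y#xs) ! Suc 0} \<in> E" using w unfolding walk_def by force
  ultimately show "x \<in> V \<and> {x, y} \<in> E \<and> walk V E (y # xs)" using w by (simp add: walk_def)
next
  assume h: "x \<in> V \<and> {x, y} \<in> E \<and> walk V E (y # xs)"
  show "walk V E (x # y # xs)" unfolding walk_def
  proof (intro conjI allI impI)
    show "set (x # y # xs) \<subseteq> V" using h by (simp add: walk_def)
  next
    fix i assume i: "Suc i < length (x # y # xs)"
    show "{(x # y # xs) ! i, (x # y # xs) ! Suc i} \<in> E"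
    proof (cases i)
      case 0 then show ?thesis using h by simp
    next
      case (Suc j) then show ?thesis using h i by (simp add: walk_def)
    qed
  qed simp
qed

lemma walk_ConsD: "walk V E (x # xs) \<Longrightarrow> xs \<noteq> [] \<Longrightarrow> walk V E xs"
  by (cases xs) (auto simp: walk_Cons2)

lemma walk_append:
  "walk V E xs \<Longrightarrow> walk V E ys \<Longrightarrow> last xs = hd ys \<Longrightarrow> walk V E (xs @ tl ys)"
proof (induction xs)
  case Nil then show ?case by (simp add: walk_def)
next
  case (Cons x xs)
  show ?case
  proof (cases xs)
    case Nil
    then show ?thesis using Cons.prems by (cases ys) auto
  next
    case (Cons y zs)
    have l: "last xs = hd ys" using Cons.prems(3) Cons by simp
    have "walk V E (xs @ tl ys)" using Cons.IH[OF walk_ConsD[OF Cons.prems(1)] Cons.prems(2) l] Cons by simp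
    then show ?thesis using Cons.prems Cons by (simp add: walk_Cons2)
  qed
qed

lemma gdist_le:
  assumes "walk V E xs" "hd xs = u" "last xs = v"
  shows "gdist V E u v \<le> real (length xs - 1)"
proof -
  have "length xs = Suc (length xs - 1)" using assms(1) by (cases xs) (auto simp: walk_def)
  then have "(LEAST n. \<exists>xs. walk V E xs \<and> hd xs = u \<and> last xs = v \<and> length xs = Suc n) \<le> length xs - 1"
    using assms by (intro Least_le) blast
  then show ?thesis unfolding gdist_def by simp
qed

lemma gdist_nonneg: "gdist V E u v \<ge> 0"
  by (simp add: gdist_def)

lemma gdist_refl: "v \<in> V \<Longrightarrow> gdist V E v v \<le> 0"
  using gdist_le[of V E "[v]" v v] walk_single[of v V E] by simp

lemma gdist_attained:
  assumes "graph_connected V E" "u \<in> V" "v \<in> V"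
  shows "\<exists>xs. walk V E xs \<and> hd xs = u \<and> last xs = v \<and> real (length xs - 1) = gdist V E u v"
proof -
  obtain xs where xs: "walk V E xs" "hd xs = u" "last xs = v"
    using assms unfolding graph_connected_def by blast
  then have "length xs = Suc (length xs - 1)" by (cases xs) (auto simp: walk_def)
  then have ex: "\<exists>n. \<exists>xs. walk V E xs \<and> hd xs = u \<and> last xs = v \<and> length xs = Suc n"
    using xs by blast
  from LeastI_ex[OF ex] obtain ys where
    "walk V E ys" "hd ys = u" "last ys = v"
    "length ys = Suc (LEAST n. \<exists>xs. walk V E xs \<and> hd xs = u \<and> last xs = v \<and> length xs = Suc n)"
    by blast
  then show ?thesis unfolding gdist_def by (intro exI[of _ ys]) simp
qed

lemma gdist_triangle:
  assumes "graph_connected V E" "u \<in> V" "v \<in> V" "w \<in> V"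
  shows "gdist V E u w \<le> gdist V E u v + gdist V E v w"
proof -
  obtain xs where xs: "walk V E xs" "hd xs = u" "last xs = v" "real (length xs - 1) = gdist V E u v"
    using gdist_attained assms by metis
  obtain ys where ys: "walk V E ys" "hd ys = v" "last ys = w" "real (length ys - 1) = gdist V E v w"
    using gdist_attained assms by metis
  have w: "walk V E (xs @ tl ys)" using walk_append xs ys by metis
  have ne: "xs \<noteq> []" "ys \<noteq> []" using xs ys by (auto simp: walk_def)
  have "hd (xs @ tl ys) = u" using xs ne by simp
  moreover have "last (xs @ tl ys) = w"
  proof (cases "tl ys = []")
    case True
    then have "ys = [hd ys]" using ne by (cases ys) auto
    then show ?thesis using xs ys True by (metis append.right_neutral last.simps)
  next
    case False
    then show ?thesis using ys ne by (cases ys) auto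
  qed
  ultimately have "gdist V E u w \<le> real (length (xs @ tl ys) - 1)"
    using gdist_le w by metis
  also have "\<dots> = real (length xs - 1) + real (length ys - 1)"
    using ne by (cases xs; cases ys) auto
  finally show ?thesis using xs ys by simp
qed

lemma gdist_invariant:
  assumes act: "acts_by_automorphisms G \<phi> V E" and g: "g \<in> carrier G"
    and conn: "graph_connected V E" and a: "a \<in> V" and b: "b \<in> V"
  shows "gdist V E (\<phi> g a) (\<phi> g b) \<le> gdist V E a b"
proof -
  have ga: "group_action G V \<phi>" and edg: "\<forall>u\<in>V. \<forall>v\<in>V. {u, v} \<in> E \<longleftrightarrow> {\<phi> g u, \<phi> g v} \<in> E"
    using act g unfolding acts_by_automorphisms_def by auto
  have img: "\<And>x. x \<in> V \<Longrightarrow> \<phi> g x \<in> V" using group_action.element_image[OF ga g] by blast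
  obtain xs where xs: "walk V E xs" "hd xs = a" "last xs = b" "real (length xs - 1) = gdist V E a b"
    using gdist_attained conn a b by metis
  have "walk V E (map (\<phi> g) xs)"
    using xs(1) unfolding walk_def
  proof (intro conjI allI impI)
    assume w: "xs \<noteq> [] \<and> set xs \<subseteq> V \<and> (\<forall>i. Suc i < length xs \<longrightarrow> {xs ! i, xs ! Suc i} \<in> E)"
    then show "map (\<phi> g) xs \<noteq> []" by simp
    show "set (map (\<phi> g) xs) \<subseteq> V" using w img by auto
    fix i assume i: "Suc i < length (map (\<phi> g) xs)"
    then have "{xs ! i, xs ! Suc i} \<in> E" "xs ! i \<in> V" "xs ! Suc i \<in> V" using w by auto
    then show "{map (\<phi> g) xs ! i, map (\<phi> g) xs ! Suc i} \<in> E" using edg i by auto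
  qed
  moreover have "hd (map (\<phi> g) xs) = \<phi> g a" "last (map (\<phi> g) xs) = \<phi> g b"
    using xs by (auto simp: walk_def hd_map last_map)
  ultimately have "gdist V E (\<phi> g a) (\<phi> g b) \<le> real (length (map (\<phi> g) xs) - 1)"
    using gdist_le by metis
  then show ?thesis using xs by simp
qed

lemma walk_lipschitz:
  assumes K: "\<And>u v. {u, v} \<in> E1 \<Longrightarrow> u \<in> V1 \<Longrightarrow> v \<in> V1 \<Longrightarrow> gdist V2 E2 (f u) (f v) \<le> K"
    and f: "f ` V1 \<subseteq> V2" and conn: "graph_connected V2 E2" and K0: "K \<ge> 0"
  shows "walk V1 E1 xs \<Longrightarrow> gdist V2 E2 (f (hd xs)) (f (last xs)) \<le> K * real (length xs - 1)"
proof (induction xs)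
  case Nil then show ?case by (simp add: walk_def)
next
  case (Cons x xs)
  note pr = Cons.prems and IH = Cons.IH
  show ?case
  proof (cases xs)
    case Nil
    then have "x \<in> V1" using pr by (simp add: walk_def)
    then show ?thesis using gdist_refl[of "f x" V2 E2] f Nil by auto
  next
    case (Cons y ys)
    then have h: "x \<in> V1" "{x, y} \<in> E1" "walk V1 E1 xs" using pr Cons by (auto simp: walk_Cons2)
    then have yV: "y \<in> V1" "last xs \<in> V1" using Cons by (auto simp: walk_def)
    have "gdist V2 E2 (f x) (f (last xs)) \<le> gdist V2 E2 (f x) (f y) + gdist V2 E2 (f y) (f (last xs))"
    proof -
      have "f x \<in> V2" "f y \<in> V2" "f (last xs) \<in> V2" using f h yV by auto
      then show ?thesis using gdist_triangle[OF conn] by blast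
    qed
    also have "\<dots> \<le> K + K * real (length xs - 1)"
      using K h yV IH Cons by (intro add_mono) auto
    also have "\<dots> = K * real (length (x # xs) - 1)" using Cons by (simp add: algebra_simps)
    finally show ?thesis using Cons by simp
  qed
qed

lemma one_direction:
  assumes grp: "group G" and gr1: "graph V1 E1" and conn1: "graph_connected V1 E1"
    and conn2: "graph_connected V2 E2" and act2: "acts_by_automorphisms G \<phi>2 V2 E2"
    and act1: "acts_by_automorphisms G \<phi>1 V1 E1"
    and fin: "finitely_many_edge_orbits G \<phi>1 E1"
    and f: "f ` V1 \<subseteq> V2" and eq: "\<forall>g\<in>carrier G. \<forall>v\<in>V1. f (\<phi>1 g v) = \<phi>2 g (f v)"
  shows "\<exists>K\<ge>0. \<forall>x\<in>V1. \<forall>y\<in>V1. gdist V2 E2 (f x) (f y) \<le> K * gdist V1 E1 x y"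
proof -
  let ?\<psi> = "\<lambda>g e. \<phi>1 g ` e"
  let ?O = "orbits G E1 ?\<psi>"
  define rep where "rep Q = (SOME e0. e0 \<in> E1 \<and> Q = orbit G ?\<psi> e0)" for Q
  define W where "W e = Max ((\<lambda>(a, b). gdist V2 E2 (f a) (f b)) ` (e \<times> e))" for e
  define K where "K = Max (insert 0 (W ` rep ` ?O))"
  have finO: "finite ?O" using fin unfolding finitely_many_edge_orbits_def .
  have K0: "K \<ge> 0" unfolding K_def using finO by simp
  have edge: "gdist V2 E2 (f u) (f v) \<le> K" if uv: "{u, v} \<in> E1" "u \<in> V1" "v \<in> V1" for u v
  proof -
    let ?e = "{u, v}"
    have inO: "orbit G ?\<psi> ?e \<in> ?O" using uv unfolding orbits_def by blast
    have "\<exists>e0. e0 \<in> E1 \<and> orbit G ?\<psi> ?e = orbit G ?\<psi> e0" using uv by blast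
    then have r: "rep (orbit G ?\<psi> ?e) \<in> E1" "orbit G ?\<psi> ?e = orbit G ?\<psi> (rep (orbit G ?\<psi> ?e))"
      unfolding rep_def by (metis (mono_tags, lifting) someI_ex)+
    define e0 where "e0 = rep (orbit G ?\<psi> ?e)"
    have WK: "W e0 \<le> K" unfolding K_def e0_def using finO inO by (intro Max_ge) auto
    have "?e \<in> orbit G ?\<psi> ?e"
    proof -
      have ga1: "group_action G V1 \<phi>1" using act1 unfolding acts_by_automorphisms_def by blast
      have "\<phi>1 \<one>\<^bsub>G\<^esub> u = u" "\<phi>1 \<one>\<^bsub>G\<^esub> v = v"
        using group_action.id_eq_one[OF ga1] uv by (metis restrict_apply')+
      then have "\<phi>1 \<one>\<^bsub>G\<^esub> ` ?e = ?e" by simp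
      then show ?thesis unfolding orbit_def using monoid.one_closed[OF group.is_monoid[OF grp]] by force
    qed
    then have "?e \<in> orbit G ?\<psi> e0" using r(2) unfolding e0_def by simp
    then obtain g where g: "g \<in> carrier G" "?e = \<phi>1 g ` e0"
      unfolding orbit_def by blast
    obtain u0 v0 where e0: "e0 = {u0, v0}" "u0 \<in> V1" "v0 \<in> V1"
      using r(1) gr1 unfolding e0_def graph_def by blast
    have "(u = \<phi>1 g u0 \<and> v = \<phi>1 g v0) \<or> (u = \<phi>1 g v0 \<and> v = \<phi>1 g u0)"
      using g(2) e0(1) by (auto simp: doubleton_eq_iff)
    then obtain a b where ab: "a \<in> e0" "b \<in> e0" "u = \<phi>1 g a" "v = \<phi>1 g b" using e0 by blast
    have abV: "a \<in> V1" "b \<in> V1" using ab e0 by auto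
    have "gdist V2 E2 (f u) (f v) = gdist V2 E2 (\<phi>2 g (f a)) (\<phi>2 g (f b))"
      using eq g abV ab by simp
    also have "\<dots> \<le> gdist V2 E2 (f a) (f b)"
      using gdist_invariant[OF act2 g(1) conn2] abV f by auto
    also have "\<dots> \<le> W e0" unfolding W_def using e0 ab by (intro Max_ge) auto
    finally show ?thesis using WK by simp
  qed
  have "\<forall>x\<in>V1. \<forall>y\<in>V1. gdist V2 E2 (f x) (f y) \<le> K * gdist V1 E1 x y"
  proof (intro ballI)
    fix x y assume xy: "x \<in> V1" "y \<in> V1"
    obtain xs where xs: "walk V1 E1 xs" "hd xs = x" "last xs = y" "real (length xs - 1) = gdist V1 E1 x y"
      using gdist_attained conn1 xy by metis
    show "gdist V2 E2 (f x) (f y) \<le> K * gdist V1 E1 x y"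
      using walk_lipschitz[of E1 V1 V2 E2 f K, OF edge f conn2 K0 xs(1)] xs by simp
  qed
  then show ?thesis using K0 by blast
qed

theorem lemma3p1:
  fixes G :: "('g, 'm) monoid_scheme"
    and \<phi>1 :: "'g \<Rightarrow> 'a \<Rightarrow> 'a" and \<phi>2 :: "'g \<Rightarrow> 'b \<Rightarrow> 'b"
    and V1 :: "'a set" and E1 :: "'a set set" and V2 :: "'b set" and E2 :: "'b set set"
    and \<beta> :: "'a \<Rightarrow> 'b"
  assumes "group G"
    and "graph V1 E1" and "graph V2 E2"
    and "graph_connected V1 E1" and "graph_connected V2 E2"
    and "acts_by_automorphisms G \<phi>1 V1 E1" and "acts_by_automorphisms G \<phi>2 V2 E2"
    and "finitely_many_edge_orbits G \<phi>1 E1" and "finitely_many_edge_orbits G \<phi>2 E2"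
    and "bij_betw \<beta> V1 V2"
    and "\<forall>g\<in>carrier G. \<forall>v\<in>V1. \<beta> (\<phi>1 g v) = \<phi>2 g (\<beta> v)"
  shows "quasi_isometric V1 (gdist V1 E1) V2 (gdist V2 E2)"
proof -
  define \<gamma> where "\<gamma> = inv_into V1 \<beta>"
  have bij: "bij_betw \<beta> V1 V2" by fact
  have bg: "bij_betw \<gamma> V2 V1" unfolding \<gamma>_def using bij by (rule bij_betw_inv_into)
  have f1: "\<beta> ` V1 \<subseteq> V2" using bij by (simp add: bij_betw_def)
  have f2: "\<gamma> ` V2 \<subseteq> V1" using bg by (simp add: bij_betw_def)
  have gb: "\<And>x. x \<in> V1 \<Longrightarrow> \<gamma> (\<beta> x) = x" unfolding \<gamma>_def using bij
    by (simp add: bij_betw_inv_into_left)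
  have bgz: "\<And>z. z \<in> V2 \<Longrightarrow> \<beta> (\<gamma> z) = z" unfolding \<gamma>_def using bij
    by (simp add: bij_betw_inv_into_right)
  have ga1: "group_action G V1 \<phi>1" using assms(6) unfolding acts_by_automorphisms_def by blast
  have eq2: "\<forall>g\<in>carrier G. \<forall>w\<in>V2. \<gamma> (\<phi>2 g w) = \<phi>1 g (\<gamma> w)"
  proof (intro ballI)
    fix g w assume g: "g \<in> carrier G" and w: "w \<in> V2"
    have gw: "\<gamma> w \<in> V1" using f2 w by auto
    have "\<phi>1 g (\<gamma> w) \<in> V1" using group_action.element_image[OF ga1 g gw] by blast
    moreover have "\<beta> (\<phi>1 g (\<gamma> w)) = \<phi>2 g w" using assms(11) g gw bgz w by simp
    ultimately show "\<gamma> (\<phi>2 g w) = \<phi>1 g (\<gamma> w)" using gb by metis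
  qed
  obtain K1 where K1: "K1 \<ge> 0" "\<forall>x\<in>V1. \<forall>y\<in>V1. gdist V2 E2 (\<beta> x) (\<beta> y) \<le> K1 * gdist V1 E1 x y"
    using one_direction[OF assms(1,2,4,5,7,6,8) f1 assms(11)] by blast
  obtain K2 where K2: "K2 \<ge> 0" "\<forall>x\<in>V2. \<forall>y\<in>V2. gdist V1 E1 (\<gamma> x) (\<gamma> y) \<le> K2 * gdist V2 E2 x y"
    using one_direction[OF assms(1,3,5,4,6,7,9) f2 eq2] by blast
  define lam where "lam = max K1 K2 + 1"
  have lam: "lam > 0" "K1 \<le> lam" "K2 \<le> lam" unfolding lam_def using K1 K2 by auto
  have A: "gdist V1 E1 x y / lam - 0 \<le> gdist V2 E2 (\<beta> x) (\<beta> y) \<and>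
        gdist V2 E2 (\<beta> x) (\<beta> y) \<le> lam * gdist V1 E1 x y + 0" if xy: "x \<in> V1" "y \<in> V1" for x y
  proof
    have bx: "\<beta> x \<in> V2" "\<beta> y \<in> V2" using f1 xy by auto
    have "gdist V1 E1 x y \<le> K2 * gdist V2 E2 (\<beta> x) (\<beta> y)"
      using K2(2) bx gb xy by metis
    also have "\<dots> \<le> lam * gdist V2 E2 (\<beta> x) (\<beta> y)"
      using lam gdist_nonneg by (intro mult_right_mono) auto
    finally show "gdist V1 E1 x y / lam - 0 \<le> gdist V2 E2 (\<beta> x) (\<beta> y)"
      using lam(1) by (simp add: divide_le_eq mult.commute)
    have "gdist V2 E2 (\<beta> x) (\<beta> y) \<le> K1 * gdist V1 E1 x y" using K1 xy by blast
    also have "\<dots> \<le> lam * gdist V1 E1 x y"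
      using lam gdist_nonneg by (intro mult_right_mono) auto
    finally show "gdist V2 E2 (\<beta> x) (\<beta> y) \<le> lam * gdist V1 E1 x y + 0" by simp
  qed
  have B: "\<exists>x\<in>V1. gdist V2 E2 z (\<beta> x) \<le> 0" if z: "z \<in> V2" for z
    using f2 z bgz gdist_refl[OF z, of E2] by (intro bexI[of _ "\<gamma> z"]) auto
  show ?thesis unfolding quasi_isometric_def
    apply (rule exI[of _ lam], intro conjI, rule lam(1))
    apply (rule exI[of _ 0], simp only: order_refl simp_thms)
    apply (rule exI[of _ 0], simp only: order_refl simp_thms)
    apply (rule exI[of _ \<beta>])
    using f1 A B by blast
qed

end
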